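(* Let $(A,\cdot,[\cdot,\cdot],\alpha)$ be a Hom-Poisson algebra with $\alpha$ invertible, and let $\omega\in\wedge^2A^*$ be nondegenerate (i.e. $\omega^\sharp:A\to A^*$, $\langle\omega^\sharp(x),y\rangle=\omega(x,y)$, is invertible) such that for all $x,y,z\in A$: $\omega(x\cdot y,\alpha(z))+\omega(y\cdot z,\alpha(x))+\omega(z\cdot x,\alpha(y))=0$, $\omega([x,y],\alpha(z))+\omega([y,z],\alpha(x))+\omega([z,x],\alpha(y))=0$, and $\omega(x,y)=\omega(\alpha(x),\alpha(y))$. Then there is a compatible Hom-pre-Poisson algebra structure $(A,\diamond,*,\alpha)$ on $A$ determined by $\omega(x\diamond y,z)=\omega(y,\alpha^{-1}(x)\cdot\alpha^{-2}(z))$ and $\omega(x*y,z)=-\omega(y,[\alpha^{-1}(x),\alpha^{-2}(z)])$ for all $x,y,z\in A$.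
   Context: A Hom-Poisson algebra $(A,\cdot,[\cdot,\cdot],\alpha)$: $(A,\cdot,\alpha)$ commutative Hom-associative (commutative product, $\alpha$ multiplicative, $\alpha(x)\cdot(y\cdot z)=(x\cdot y)\cdot\alpha(z)$), $(A,[\cdot,\cdot],\alpha)$ Hom-Lie (skew bracket, $\alpha$ multiplicative, $[\alpha x,[y,z]]+[\alpha y,[z,x]]+[\alpha z,[x,y]]=0$), and $[\alpha(x),y\cdot z]=[x,y]\cdot\alpha(z)+\alpha(y)\cdot[x,z]$. A Hom-pre-Poisson algebra $(A,\diamond,*,\alpha)$: $\alpha$ multiplicative for both products, $\alpha(x)\diamond(y\diamond z)=(x\diamond y)\diamond\alpha(z)+(y\diamond x)\diamond\alpha(z)$, $(x*y)*\alpha(z)-\alpha(x)*(y*z)=(y*x)*\alpha(z)-\alpha(y)*(x*z)$, $(x*y-y*x)\diamond\alpha(z)=\alpha(x)*(y\diamond z)-\alpha(y)\diamond(x*z)$, $(x\diamond y+y\diamond x)*\alpha(z)=\alpha(x)\diamond(y*z)+\alpha(y)\diamond(x*z)$. It is compatible with $(A,\cdot,[\cdot,\cdot],\alpha)$ if $x\cdot y=x\diamond y+y\diamond x$ and $[x,y]=x*y-y*x$. *)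

theory Defs
  imports Complex_Main
begin

definition bilinear_map ::
  "('k::field \<Rightarrow> 'v::ab_group_add \<Rightarrow> 'v) \<Rightarrow> ('k \<Rightarrow> 'w::ab_group_add \<Rightarrow> 'w) \<Rightarrow> ('v \<Rightarrow> 'v \<Rightarrow> 'w) \<Rightarrow> bool"
  where "bilinear_map s1 s2 f \<longleftrightarrow>
     (\<forall>x. Vector_Spaces.linear s1 s2 (f x)) \<and> (\<forall>y. Vector_Spaces.linear s1 s2 (\<lambda>x. f x y))"

definition hom_poisson ::
  "('k::field \<Rightarrow> 'v::ab_group_add \<Rightarrow> 'v) \<Rightarrow> ('v \<Rightarrow> 'v \<Rightarrow> 'v) \<Rightarrow> ('v \<Rightarrow> 'v \<Rightarrow> 'v) \<Rightarrow> ('v \<Rightarrow> 'v) \<Rightarrow> bool"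
  where "hom_poisson s mul br \<alpha> \<longleftrightarrow>
     Vector_Spaces.linear s s \<alpha> \<and> bilinear_map s s mul \<and> bilinear_map s s br \<and>
     (\<forall>x y. mul x y = mul y x) \<and>
     (\<forall>x y. \<alpha> (mul x y) = mul (\<alpha> x) (\<alpha> y)) \<and>
     (\<forall>x y z. mul (\<alpha> x) (mul y z) = mul (mul x y) (\<alpha> z)) \<and>
     (\<forall>x y. br x y = - br y x) \<and>
     (\<forall>x y. \<alpha> (br x y) = br (\<alpha> x) (\<alpha> y)) \<and>
     (\<forall>x y z. br (\<alpha> x) (br y z) + br (\<alpha> y) (br z x) + br (\<alpha> z) (br x y) = 0) \<and>
     (\<forall>x y z. br (\<alpha> x) (mul y z) = mul (br x y) (\<alpha> z) + mul (\<alpha> y) (br x z))"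

definition hom_pre_poisson ::
  "('k::field \<Rightarrow> 'v::ab_group_add \<Rightarrow> 'v) \<Rightarrow> ('v \<Rightarrow> 'v \<Rightarrow> 'v) \<Rightarrow> ('v \<Rightarrow> 'v \<Rightarrow> 'v) \<Rightarrow> ('v \<Rightarrow> 'v) \<Rightarrow> bool"
  where "hom_pre_poisson s dia st \<alpha> \<longleftrightarrow>
     Vector_Spaces.linear s s \<alpha> \<and> bilinear_map s s dia \<and> bilinear_map s s st \<and>
     (\<forall>x y. \<alpha> (dia x y) = dia (\<alpha> x) (\<alpha> y)) \<and>
     (\<forall>x y. \<alpha> (st x y) = st (\<alpha> x) (\<alpha> y)) \<and>
     (\<forall>x y z. dia (\<alpha> x) (dia y z) = dia (dia x y) (\<alpha> z) + dia (dia y x) (\<alpha> z)) \<and>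
     (\<forall>x y z. st (st x y) (\<alpha> z) - st (\<alpha> x) (st y z) = st (st y x) (\<alpha> z) - st (\<alpha> y) (st x z)) \<and>
     (\<forall>x y z. dia (st x y - st y x) (\<alpha> z) = st (\<alpha> x) (dia y z) - dia (\<alpha> y) (st x z)) \<and>
     (\<forall>x y z. st (dia x y + dia y x) (\<alpha> z) = dia (\<alpha> x) (st y z) + dia (\<alpha> y) (st x z))"

definition compatible_pre_poisson ::
  "('v::ab_group_add \<Rightarrow> 'v \<Rightarrow> 'v) \<Rightarrow> ('v \<Rightarrow> 'v \<Rightarrow> 'v) \<Rightarrow> ('v \<Rightarrow> 'v \<Rightarrow> 'v) \<Rightarrow> ('v \<Rightarrow> 'v \<Rightarrow> 'v) \<Rightarrow> bool"
  where "compatible_pre_poisson dia st mul br \<longleftrightarrow>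
     (\<forall>x y. mul x y = dia x y + dia y x) \<and> (\<forall>x y. br x y = st x y - st y x)"

end

theory Submission
  imports Defs
begin

lemma grp3: "(a::'a::ab_group_add) + b + c = 0 \<Longrightarrow> - c = a + b"
  by (metis add.commute neg_eq_iff_add_eq_0)

lemma grp4: "(p::'a::ab_group_add) - r = q - t \<Longrightarrow> p - q = r - t"
  by (simp add: algebra_simps)

theorem theorem5p10:
  fixes s :: "'k::field \<Rightarrow> 'v::ab_group_add \<Rightarrow> 'v"
    and mul br :: "'v \<Rightarrow> 'v \<Rightarrow> 'v"
    and \<alpha> :: "'v \<Rightarrow> 'v"
    and \<omega> :: "'v \<Rightarrow> 'v \<Rightarrow> 'k"
  assumes vs: "vector_space s"
    and hp: "hom_poisson s mul br \<alpha>"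
    and inv: "bij \<alpha>"
    and bil: "bilinear_map s (*) \<omega>"
    and alt: "\<forall>x. \<omega> x x = 0"
    and nondeg: "\<forall>f. Vector_Spaces.linear s (*) f \<longrightarrow> (\<exists>!x. \<omega> x = f)"
    and c1: "\<forall>x y z. \<omega> (mul x y) (\<alpha> z) + \<omega> (mul y z) (\<alpha> x) + \<omega> (mul z x) (\<alpha> y) = 0"
    and c2: "\<forall>x y z. \<omega> (br x y) (\<alpha> z) + \<omega> (br y z) (\<alpha> x) + \<omega> (br z x) (\<alpha> y) = 0"
    and c3: "\<forall>x y. \<omega> x y = \<omega> (\<alpha> x) (\<alpha> y)"
  shows "\<exists>dia st. hom_pre_poisson s dia st \<alpha> \<and> compatible_pre_poisson dia st mul br \<and>
     (\<forall>x y z. \<omega> (dia x y) z = \<omega> y (mul (inv \<alpha> x) (inv \<alpha> (inv \<alpha> z)))) \<and>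
     (\<forall>x y z. \<omega> (st x y) z = - \<omega> y (br (inv \<alpha> x) (inv \<alpha> (inv \<alpha> z))))"
proof -
  define b where "b = inv \<alpha>"
  have ab[simp]: "\<alpha> (b x) = x" for x using inv unfolding b_def by (simp add: bij_is_surj surj_f_inv_f)
  have ba[simp]: "b (\<alpha> x) = x" for x using inv unfolding b_def by (simp add: bij_is_inj inv_f_f)
  from hp have la: "Vector_Spaces.linear s s \<alpha>" and bm: "bilinear_map s s mul" and bb: "bilinear_map s s br"
    and mcomm: "\<forall>x y. mul x y = mul y x" and amul: "\<forall>x y. \<alpha> (mul x y) = mul (\<alpha> x) (\<alpha> y)"
    and massoc: "\<forall>x y z. mul (\<alpha> x) (mul y z) = mul (mul x y) (\<alpha> z)"
    and bskew: "\<forall>x y. br x y = - br y x" and abr: "\<forall>x y. \<alpha> (br x y) = br (\<alpha> x) (\<alpha> y)"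
    and jac: "\<forall>x y z. br (\<alpha> x) (br y z) + br (\<alpha> y) (br z x) + br (\<alpha> z) (br x y) = 0"
    and leib: "\<forall>x y z. br (\<alpha> x) (mul y z) = mul (br x y) (\<alpha> z) + mul (\<alpha> y) (br x z)"
    unfolding hom_poisson_def by blast+
  have vsk: "vector_space ((*) :: 'k \<Rightarrow> 'k \<Rightarrow> 'k)"
    using bil unfolding bilinear_map_def Vector_Spaces.linear_iff by blast
  have aadd: "\<alpha> (x + y) = \<alpha> x + \<alpha> y" and asc: "\<alpha> (s c x) = s c (\<alpha> x)" for x y c
    using la unfolding Vector_Spaces.linear_iff by auto
  have badd[simp]: "b (x + y) = b x + b y" for x y
    using ba[of "b x + b y"] by (simp only: aadd ab)
  have bsc[simp]: "b (s c x) = s c (b x)" for x c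
    using ba[of "s c (b x)"] by (simp only: asc ab)
  have b0[simp]: "b 0 = 0" using badd[of 0 0] by (simp only: add_0 add_cancel_right_right)
  have bneg[simp]: "b (- x) = - b x" for x
    using badd[of "- x" x] by (simp add: eq_neg_iff_add_eq_0)
  have bdiff[simp]: "b (x - y) = b x - b y" for x y
    by (simp only: diff_conv_add_uminus badd bneg)
  have bmul[simp]: "b (mul x y) = mul (b x) (b y)" for x y
    using ba[of "mul (b x) (b y)"] by (simp only: amul ab)
  have bbr[simp]: "b (br x y) = br (b x) (b y)" for x y
    using ba[of "br (b x) (b y)"] by (simp only: abr ab)
  have madd1[simp]: "mul (x + y) z = mul x z + mul y z" and madd2[simp]: "mul z (x + y) = mul z x + mul z y"
    and msc1[simp]: "mul (s c x) z = s c (mul x z)" and msc2[simp]: "mul z (s c x) = s c (mul z x)" for x y z c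
    using bm unfolding bilinear_map_def Vector_Spaces.linear_iff by auto
  have radd1[simp]: "br (x + y) z = br x z + br y z" and radd2[simp]: "br z (x + y) = br z x + br z y"
    and rsc1[simp]: "br (s c x) z = s c (br x z)" and rsc2[simp]: "br z (s c x) = s c (br z x)" for x y z c
    using bb unfolding bilinear_map_def Vector_Spaces.linear_iff by auto
  have wadd1[simp]: "\<omega> (x + y) z = \<omega> x z + \<omega> y z" and wadd2[simp]: "\<omega> z (x + y) = \<omega> z x + \<omega> z y"
    and wsc1[simp]: "\<omega> (s c x) z = c * \<omega> x z" and wsc2[simp]: "\<omega> z (s c x) = c * \<omega> z x" for x y z c
    using bil unfolding bilinear_map_def Vector_Spaces.linear_iff by auto
  have wz1[simp]: "\<omega> 0 z = 0" for z using wadd1[of 0 0 z] by (simp only: add_0 add_cancel_right_right)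
  have wz2[simp]: "\<omega> z 0 = 0" for z using wadd2[of z 0 0] by (simp only: add_0 add_cancel_right_right)
  have wneg1[simp]: "\<omega> (- x) z = - \<omega> x z" for x z
    using wadd1[of "- x" x z] by (simp add: eq_neg_iff_add_eq_0)
  have wneg2[simp]: "\<omega> z (- x) = - \<omega> z x" for x z
    using wadd2[of z "- x" x] by (simp add: eq_neg_iff_add_eq_0)
  have wdiff1[simp]: "\<omega> (x - y) z = \<omega> x z - \<omega> y z" for x y z
    by (simp only: diff_conv_add_uminus wadd1 wneg1)
  have wdiff2[simp]: "\<omega> z (x - y) = \<omega> z x - \<omega> z y" for x y z
    by (simp only: diff_conv_add_uminus wadd2 wneg2)
  have mz1[simp]: "mul 0 z = 0" and mz2[simp]: "mul z 0 = 0" for z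
    using madd1[of 0 0 z] madd2[of z 0 0] by (simp_all only: add_0 add_cancel_right_right)
  have rz1[simp]: "br 0 z = 0" and rz2[simp]: "br z 0 = 0" for z
    using radd1[of 0 0 z] radd2[of z 0 0] by (simp_all only: add_0 add_cancel_right_right)
  have mneg1[simp]: "mul (- x) z = - mul x z" for x z
    using madd1[of "- x" x z] by (simp add: eq_neg_iff_add_eq_0)
  have mneg2[simp]: "mul z (- x) = - mul z x" for x z
    using madd2[of z "- x" x] by (simp add: eq_neg_iff_add_eq_0)
  have rneg1[simp]: "br (- x) z = - br x z" for x z
    using radd1[of "- x" x z] by (simp add: eq_neg_iff_add_eq_0)
  have rneg2[simp]: "br z (- x) = - br z x" for x z
    using radd2[of z "- x" x] by (simp add: eq_neg_iff_add_eq_0)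
  have mdiff1[simp]: "mul (x - y) z = mul x z - mul y z" and mdiff2[simp]: "mul z (x - y) = mul z x - mul z y"
    and rdiff1[simp]: "br (x - y) z = br x z - br y z" and rdiff2[simp]: "br z (x - y) = br z x - br z y" for x y z
    by (simp_all only: diff_conv_add_uminus madd1 madd2 radd1 radd2 mneg1 mneg2 rneg1 rneg2)
  have wskew: "\<omega> x y = - \<omega> y x" for x y
  proof -
    have "\<omega> x y + \<omega> y x = 0" using alt[rule_format, of "x + y"] alt[rule_format, of x] alt[rule_format, of y]
      by (simp only: wadd1 wadd2 add_0 add_0_right add.assoc add.commute)
    then show ?thesis by (simp add: eq_neg_iff_add_eq_0)
  qed
  have wa1[simp]: "\<omega> (\<alpha> x) y = \<omega> x (b y)" for x y
    using c3[rule_format, of x "b y"] by simp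
  have winj: "u = v" if h: "\<And>w. \<omega> u w = \<omega> v w" for u v
  proof -
    have "Vector_Spaces.linear s (*) (\<omega> v)" using bil unfolding bilinear_map_def by blast
    then have "\<exists>!x. \<omega> x = \<omega> v" using nondeg by blast
    moreover have "\<omega> u = \<omega> v" using h by auto
    ultimately show ?thesis by blast
  qed
  have theW: "\<omega> (THE u. \<omega> u = f) = f" if "Vector_Spaces.linear s (*) f" for f
    using nondeg that theI'[of "\<lambda>u. \<omega> u = f"] by blast
  define D where "D x y = (THE u. \<omega> u = (\<lambda>z. \<omega> y (mul (b x) (b (b z)))))" for x y
  define S where "S x y = (THE u. \<omega> u = (\<lambda>z. - \<omega> y (br (b x) (b (b z)))))" for x y
  have Dw[simp]: "\<omega> (D x y) z = \<omega> y (mul (b x) (b (b z)))" for x y z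
  proof -
    have "Vector_Spaces.linear s (*) (\<lambda>z. \<omega> y (mul (b x) (b (b z))))"
      by (simp add: Vector_Spaces.linear_iff vs vsk)
    from theW[OF this] show ?thesis unfolding D_def by simp
  qed
  have Sw[simp]: "\<omega> (S x y) z = - \<omega> y (br (b x) (b (b z)))" for x y z
  proof -
    have "Vector_Spaces.linear s (*) (\<lambda>z. - \<omega> y (br (b x) (b (b z))))"
      by (simp add: Vector_Spaces.linear_iff vs vsk algebra_simps)
    from theW[OF this] show ?thesis unfolding S_def by simp
  qed
  have bD: "bilinear_map s s D"
    unfolding bilinear_map_def Vector_Spaces.linear_iff by (auto intro!: winj simp: vs)
  have bS: "bilinear_map s s S"
    unfolding bilinear_map_def Vector_Spaces.linear_iff by (auto intro!: winj simp: vs algebra_simps)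
  have aD: "\<alpha> (D x y) = D (\<alpha> x) (\<alpha> y)" for x y
    by (rule winj) simp
  have aS: "\<alpha> (S x y) = S (\<alpha> x) (\<alpha> y)" for x y
    by (rule winj) simp
  have Dadd1: "D (x + y) z = D x z + D y z" and Sadd1: "S (x + y) z = S x z + S y z"
    and Sdiff1: "S (x - y) z = S x z - S y z" for x y z
    by (auto intro!: winj)
  have mcomp: "mul x y = D x y + D y x" for x y
  proof (rule winj)
    fix z
    have e1: "\<omega> (mul (b x) (b (b z))) y + \<omega> (mul (b (b z)) (b y)) x + \<omega> (mul (b y) (b x)) (b z) = 0"
      using c1[rule_format, of "b x" "b (b z)" "b y"] by simp
    have e2: "\<omega> (mul (b y) (b x)) (b z) = \<omega> (mul x y) z"
      using c3[rule_format, of "mul (b y) (b x)" "b z"] amul mcomm[rule_format, of y x] by simp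
    have e3: "\<omega> y (mul (b x) (b (b z))) = - \<omega> (mul (b x) (b (b z))) y" by (rule wskew)
    have e4: "\<omega> x (mul (b y) (b (b z))) = - \<omega> (mul (b (b z)) (b y)) x"
      using wskew mcomm by metis
    show "\<omega> (mul x y) z = \<omega> (D x y + D y x) z"
      unfolding wadd1 Dw e3 e4 using e1 unfolding e2 by algebra
  qed
  have brcomp: "br x y = S x y - S y x" for x y
  proof (rule winj)
    fix z
    have e1: "\<omega> (br (b x) (b (b z))) y + \<omega> (br (b (b z)) (b y)) x + \<omega> (br (b y) (b x)) (b z) = 0"
      using c2[rule_format, of "b x" "b (b z)" "b y"] by simp
    have e2: "\<omega> (br (b y) (b x)) (b z) = - \<omega> (br x y) z"
      using c3[rule_format, of "br (b y) (b x)" "b z"] abr bskew[rule_format, of y x] by simp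
    have e3: "\<omega> y (br (b x) (b (b z))) = - \<omega> (br (b x) (b (b z))) y" by (rule wskew)
    have e4: "\<omega> x (br (b y) (b (b z))) = \<omega> (br (b (b z)) (b y)) x"
      using wskew[of x "br (b (b z)) (b y)"] bskew[rule_format, of "b y" "b (b z)"] by simp
    show "\<omega> (br x y) z = \<omega> (S x y - S y x) z"
      unfolding wdiff1 Sw e3 e4 using e1 unfolding e2 by algebra
  qed
  have I1: "D (\<alpha> x) (D y z) = D (D x y) (\<alpha> z) + D (D y x) (\<alpha> z)" for x y z
  proof -
    have "D (D x y) (\<alpha> z) + D (D y x) (\<alpha> z) = D (mul x y) (\<alpha> z)" by (simp only: mcomp Dadd1)
    moreover have "D (\<alpha> x) (D y z) = D (mul x y) (\<alpha> z)"
    proof (rule winj)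
      fix w
      have as: "mul (b y) (mul (b (b x)) (b (b (b (b w))))) = mul (mul (b (b x)) (b (b y))) (b (b (b w)))"
        using massoc[rule_format, of "b (b y)" "b (b x)" "b (b (b (b w)))"] mcomm[rule_format, of "b (b y)" "b (b x)"] by simp
      show "\<omega> (D (\<alpha> x) (D y z)) w = \<omega> (D (mul x y) (\<alpha> z)) w" using as by simp
    qed
    ultimately show ?thesis by simp
  qed
  have J: "br (br (b (b x)) (b (b y))) (b (b (b w))) = br (b x) (br (b (b y)) (b (b (b (b w))))) - br (b y) (br (b (b x)) (b (b (b (b w)))))" for x y w
  proof -
    have j0: "br (b x) (br (b (b y)) (b (b (b (b w))))) + br (b y) (br (b (b (b (b w)))) (b (b x))) + br (b (b (b w))) (br (b (b x)) (b (b y))) = 0"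
      using jac[rule_format, of "b (b x)" "b (b y)" "b (b (b (b w)))"] by simp
    have sk1: "br (br (b (b x)) (b (b y))) (b (b (b w))) = - br (b (b (b w))) (br (b (b x)) (b (b y)))"
      using bskew by blast
    have sk2: "br (b (b (b (b w)))) (b (b x)) = - br (b (b x)) (b (b (b (b w))))"
      using bskew by blast
    show ?thesis unfolding sk1 using grp3[OF j0] unfolding sk2 rneg2 by (metis diff_conv_add_uminus)
  qed
  have K: "S (br x y) (\<alpha> z) = S (\<alpha> x) (S y z) - S (\<alpha> y) (S x z)" for x y z
    by (rule winj) (simp add: J)
  have I2: "S (S x y) (\<alpha> z) - S (\<alpha> x) (S y z) = S (S y x) (\<alpha> z) - S (\<alpha> y) (S x z)" for x y z
  proof (rule grp4)
    show "S (S x y) (\<alpha> z) - S (S y x) (\<alpha> z) = S (\<alpha> x) (S y z) - S (\<alpha> y) (S x z)"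
      unfolding Sdiff1[symmetric] brcomp[symmetric] by (rule K)
  qed
  have L3: "mul (br (b (b x)) (b (b y))) (b (b (b w))) = br (b x) (mul (b (b y)) (b (b (b (b w))))) - mul (b y) (br (b (b x)) (b (b (b (b w)))))" for x y w
    using leib[rule_format, of "b (b x)" "b (b y)" "b (b (b (b w)))"] by (simp add: eq_diff_eq)
  have I3: "D (S x y - S y x) (\<alpha> z) = S (\<alpha> x) (D y z) - D (\<alpha> y) (S x z)" for x y z
    unfolding brcomp[symmetric] by (rule winj) (simp add: L3)
  have L4: "br (mul (b (b x)) (b (b y))) (b (b (b w))) = br (b y) (mul (b (b x)) (b (b (b (b w))))) + br (b x) (mul (b (b y)) (b (b (b (b w)))))" for x y w
  proof -
    have l1: "br (b y) (mul (b (b x)) (b (b (b (b w))))) = mul (br (b (b y)) (b (b x))) (b (b (b w))) + mul (b x) (br (b (b y)) (b (b (b (b w)))))"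
      using leib[rule_format, of "b (b y)" "b (b x)" "b (b (b (b w)))"] by simp
    have l2: "br (b x) (mul (b (b y)) (b (b (b (b w))))) = mul (br (b (b x)) (b (b y))) (b (b (b w))) + mul (b y) (br (b (b x)) (b (b (b (b w)))))"
      using leib[rule_format, of "b (b x)" "b (b y)" "b (b (b (b w)))"] by simp
    have l3: "br (b (b (b w))) (mul (b (b x)) (b (b y))) = mul (br (b (b (b (b w)))) (b (b x))) (b y) + mul (b x) (br (b (b (b (b w)))) (b (b y)))"
      using leib[rule_format, of "b (b (b (b w)))" "b (b x)" "b (b y)"] by simp
    have s1: "br (mul (b (b x)) (b (b y))) (b (b (b w))) = - br (b (b (b w))) (mul (b (b x)) (b (b y)))" using bskew by blast
    have s2: "br (b (b y)) (b (b x)) = - br (b (b x)) (b (b y))" using bskew by blast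
    have s3: "br (b (b (b (b w)))) (b (b x)) = - br (b (b x)) (b (b (b (b w))))" using bskew by blast
    have s4: "br (b (b (b (b w)))) (b (b y)) = - br (b (b y)) (b (b (b (b w))))" using bskew by blast
    have c: "mul (br (b (b x)) (b (b (b (b w))))) (b y) = mul (b y) (br (b (b x)) (b (b (b (b w)))))" using mcomm by blast
    show ?thesis unfolding s1 l1 l2 l3 s2 s3 s4 mneg1 mneg2 c by (simp add: algebra_simps)
  qed
  have I4: "S (D x y + D y x) (\<alpha> z) = D (\<alpha> x) (S y z) + D (\<alpha> y) (S x z)" for x y z
    unfolding mcomp[symmetric] by (rule winj) (simp add: L4)
  show ?thesis
    unfolding b_def[symmetric] hom_pre_poisson_def compatible_pre_poisson_def
    using la bD bS aD aS I1 I2 I3 I4 mcomp brcomp Dw Sw by blast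
qed
end
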